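(* Assume (A1)–(A3) and $\alpha>1$, let $\mu>0$ and $LR_{target}>0$. Consider the problem of choosing parameters $\bar c\ge zMIC$ and $T_{bc}\ge0$ such that the profile $C_{bc}$ (equal to $\bar c$ on $[0,T_{bc}]$ and to $\bar c e^{-\mu(t-T_{bc})}$ for $t>T_{bc}$) satisfies $LR_{max}[C_{bc}]=LR_{target}$, with $AUC[C_{bc}]$ minimal. Let $c_{opt}$ be the unique solution in $(0,\infty)$ of $k'(c)=\frac{k(c)-r}{c}$ and $$\rho=\int_{zMIC}^{c_{opt}}\frac{k(u)-r}{u}\,du.$$ (i) If $\rho<\ln(10)\,LR_{target}\,\mu$, the solution is $\bar c=c_{opt}$ and $$T_{bc}=T_{bc,opt}=\frac{\ln(10)\,LR_{target}-\mu^{-1}\rho}{k(c_{opt})-r};$$ the maximal log-reduction $LR_{target}$ is reached at time $T^*=T_{bc,opt}+\frac1\mu\ln\left(\frac{c_{opt}}{zMIC}\right)$, and $$AUC_{bc,opt}=\left[\mu^{-1}+\frac{\ln(10)\,LR_{target}-\mu^{-1}\rho}{k(c_{opt})-r}\right]c_{opt}.$$ (ii) If $\rho\ge\ln(10)\,LR_{target}\,\mu$, the solution is $T_{bc}=0$ and $\bar c=c^*$, where $c^*$ is the solution of $\int_{zMIC}^{c^*}\frac{k(u)-r}{u}du=\ln(10)\,LR_{target}\,\mu$; so $C_{bc}(t)=c^*e^{-\mu t}$, the target is reached at $T^*=\frac1\mu\ln\left(\frac{c^*}{zMIC}\right)$, and $AUC_{bc,opt}=\mu^{-1}c^*$.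
   Context: Let $r>0$ and let $k:[0,\infty)\to[0,\infty)$ satisfy: (A1) $k(0)=0$, $k$ is continuous and strictly increasing on $[0,\infty)$, and twice differentiable on $(0,\infty)$; (A2) $\lim_{c\to\infty}k(c)=k_{max}<\infty$; (A3) either (i) (concave case) $k''(c)<0$ for all $c>0$, or (ii) (sigmoidal case) there is $c_{infl}>0$ with $k''(c)>0$ for $0<c<c_{infl}$ and $k''(c)<0$ for $c>c_{infl}$. Set $\alpha=k_{max}/r$, and let $zMIC$ be the unique $c>0$ with $k(c)=r$. For a non-negative $C\in L^1[0,\infty)$: $AUC[C]=\int_0^\infty C(t)dt$, $LR(T)=\frac{1}{\ln 10}\int_0^T[k(C(t))-r]dt$, $LR_{max}[C]=\max_{T\ge0}LR(T)$. The profile $C_{bc}$ is the one induced, under one-compartment pharmacokinetics $C'=V^{-1}d(t)-\mu C$, $C(0)=0$, by the bolus+continuous dosing schedule $d(t)=V\bar c[\delta(t)+\mu H(T_{bc}-t)]$ ($H$ the Heaviside function, $\mu>0$ the drug decay rate). *)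

theory Defs
  imports "HOL-Analysis.Analysis"
begin

definition zMIC :: "(real \<Rightarrow> real) \<Rightarrow> real \<Rightarrow> real" where
  "zMIC k r = (THE c. 0 < c \<and> k c = r)"

text \<open>Bolus + continuous concentration profile (explicit solution of the
one-compartment model with C(0)=0 and dosing V cbar [delta(t) + mu H(T - t)]),
considered for t >= 0.\<close>
definition Cbc :: "real \<Rightarrow> real \<Rightarrow> real \<Rightarrow> real \<Rightarrow> real" where
  "Cbc \<mu> cbar T t = (if t \<le> T then cbar else cbar * exp (- \<mu> * (t - T)))"

definition AUC :: "(real \<Rightarrow> real) \<Rightarrow> real" where
  "AUC C = integral {0..} C"

definition LR :: "(real \<Rightarrow> real) \<Rightarrow> real \<Rightarrow> (real \<Rightarrow> real) \<Rightarrow> real \<Rightarrow> real" where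
  "LR k r C T = (1 / ln 10) * integral {0..T} (\<lambda>t. k (C t) - r)"

definition LRmax :: "(real \<Rightarrow> real) \<Rightarrow> real \<Rightarrow> (real \<Rightarrow> real) \<Rightarrow> real" where
  "LRmax k r C = (SUP T\<in>{0..}. LR k r C T)"

definition feasible :: "(real \<Rightarrow> real) \<Rightarrow> real \<Rightarrow> real \<Rightarrow> real \<Rightarrow> real \<Rightarrow> real \<Rightarrow> bool" where
  "feasible k r \<mu> LRt cbar T \<longleftrightarrow>
     zMIC k r \<le> cbar \<and> 0 \<le> T \<and> LRmax k r (Cbc \<mu> cbar T) = LRt"

definition is_opt :: "(real \<Rightarrow> real) \<Rightarrow> real \<Rightarrow> real \<Rightarrow> real \<Rightarrow> real \<Rightarrow> real \<Rightarrow> bool" where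
  "is_opt k r \<mu> LRt cbar T \<longleftrightarrow>
     feasible k r \<mu> LRt cbar T \<and>
     (\<forall>c' T'. feasible k r \<mu> LRt c' T' \<longrightarrow> AUC (Cbc \<mu> cbar T) \<le> AUC (Cbc \<mu> c' T'))"

definition copt :: "(real \<Rightarrow> real) \<Rightarrow> (real \<Rightarrow> real) \<Rightarrow> real \<Rightarrow> real" where
  "copt k k' r = (THE c. 0 < c \<and> k' c = (k c - r) / c)"

definition rho :: "(real \<Rightarrow> real) \<Rightarrow> (real \<Rightarrow> real) \<Rightarrow> real \<Rightarrow> real" where
  "rho k k' r = integral {zMIC k r..copt k k' r} (\<lambda>u. (k u - r) / u)"

definition cstar :: "(real \<Rightarrow> real) \<Rightarrow> real \<Rightarrow> real \<Rightarrow> real \<Rightarrow> real" where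
  "cstar k r \<mu> LRt = (THE c. zMIC k r \<le> c \<and>
      integral {zMIC k r..c} (\<lambda>u. (k u - r) / u) = ln 10 * LRt * \<mu>)"

end

theory Submission
  imports Defs
begin

lemma int_ge_const:
  fixes f :: "real \<Rightarrow> real"
  assumes "a \<le> b" "continuous_on {a..b} f" "\<And>x. a \<le> x \<Longrightarrow> x \<le> b \<Longrightarrow> c \<le> f x"
  shows "(b - a) * c \<le> integral {a..b} f"
proof -
  have "integral {a..b} (\<lambda>_. c) \<le> integral {a..b} f"
    by (rule integral_le) (use assms integrable_continuous_interval in auto)
  then show ?thesis using assms(1) by (simp add: mult.commute)
qed

lemma int_le_const:
  fixes f :: "real \<Rightarrow> real"
  assumes "a \<le> b" "continuous_on {a..b} f" "\<And>x. a \<le> x \<Longrightarrow> x \<le> b \<Longrightarrow> f x \<le> c"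
  shows "integral {a..b} f \<le> (b - a) * c"
proof -
  have "integral {a..b} f \<le> integral {a..b} (\<lambda>_. c)"
    by (rule integral_le) (use assms integrable_continuous_interval in auto)
  then show ?thesis using assms(1) by (simp add: mult.commute)
qed

lemma int_split:
  fixes f :: "real \<Rightarrow> real"
  assumes "a \<le> m" "m \<le> b" "continuous_on {a..b} f"
  shows "integral {a..b} f = integral {a..m} f + integral {m..b} f"
  using Henstock_Kurzweil_Integration.integral_combine[where a=a and c=m and b=b and f=f] assms integrable_continuous_interval[of a b f] by auto

lemma int_inc_strict:
  fixes f :: "real \<Rightarrow> real"
  assumes ab: "a < b" and cf: "continuous_on {a..b} f"
    and inc: "\<And>x y. a \<le> x \<Longrightarrow> x < y \<Longrightarrow> y \<le> b \<Longrightarrow> f x < f y"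
  shows "(b - a) * f a < integral {a..b} f"
proof -
  define m where "m = (a + b) / 2"
  have m: "a < m" "m < b" using ab unfolding m_def by auto
  have c1: "continuous_on {a..m} f" "continuous_on {m..b} f"
    using cf m by (auto elim: continuous_on_subset)
  have "(m - a) * f a \<le> integral {a..m} f"
    by (rule int_ge_const) (use m c1 inc in \<open>auto simp: le_less\<close>)
  moreover have "(b - m) * f m \<le> integral {m..b} f"
    by (rule int_ge_const) (use m c1 inc in \<open>auto simp: le_less\<close>)
  moreover have "(b - m) * f a < (b - m) * f m" using inc[of a m] m by auto
  ultimately show ?thesis using int_split[of a m b f] m cf by (simp add: algebra_simps)
qed

lemma int_dec_strict:
  fixes f :: "real \<Rightarrow> real"
  assumes ab: "a < b" and cf: "continuous_on {a..b} f"
    and dec: "\<And>x y. a \<le> x \<Longrightarrow> x < y \<Longrightarrow> y \<le> b \<Longrightarrow> f y < f x"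
  shows "integral {a..b} f < (b - a) * f a"
proof -
  define m where "m = (a + b) / 2"
  have m: "a < m" "m < b" using ab unfolding m_def by auto
  have c1: "continuous_on {a..m} f" "continuous_on {m..b} f"
    using cf m by (auto elim: continuous_on_subset)
  have "integral {a..m} f \<le> (m - a) * f a"
    by (rule int_le_const) (use m c1 dec in \<open>auto simp: le_less\<close>)
  moreover have "integral {m..b} f \<le> (b - m) * f m"
    by (rule int_le_const) (use m c1 dec in \<open>auto simp: le_less\<close>)
  moreover have "(b - m) * f m < (b - m) * f a" using dec[of a m] m by auto
  ultimately show ?thesis using int_split[of a m b f] m cf by (simp add: algebra_simps)
qed

lemma Cbc_alt: "Cbc \<mu> cbar T = (\<lambda>t. cbar * exp (- \<mu> * max 0 (t - T)))"
  unfolding Cbc_def by (rule ext) (auto simp: max_def)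

lemma Cbc_cont: "continuous_on S (Cbc \<mu> cbar T)"
  unfolding Cbc_alt by (intro continuous_intros)

lemma AUC_Cbc:
  assumes mu: "0 < \<mu>" and T: "0 \<le> T"
  shows "AUC (Cbc \<mu> cbar T) = cbar * T + cbar / \<mu>"
proof -
  have h1: "(Cbc \<mu> cbar T has_integral cbar * T) {0..T}"
  proof -
    have "((\<lambda>_. cbar) has_integral cbar * T) {0..T}"
      using has_integral_const_real[of cbar 0 T] T by (simp add: mult.commute)
    then show ?thesis by (rule has_integral_cong[THEN iffD1, rotated]) (auto simp: Cbc_def)
  qed
  have h2: "(Cbc \<mu> cbar T has_integral cbar / \<mu>) {T..}"
  proof -
    have "((\<lambda>x. exp (-\<mu>*x)) has_integral exp (-\<mu>*T)/\<mu>) {T..}"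
      by (rule has_integral_exp_minus_to_infinity[OF mu])
    then have "((\<lambda>x. (cbar * exp (\<mu> * T)) * exp (-\<mu>*x)) has_integral (cbar * exp (\<mu> * T)) * (exp (-\<mu>*T)/\<mu>)) {T..}"
      by (rule has_integral_cmult_real)
    moreover have eq: "(cbar * exp (\<mu> * T)) * (exp (-\<mu>*T)/\<mu>) = cbar / \<mu>"
      by (simp add: exp_minus field_simps)
    ultimately have "((\<lambda>x. (cbar * exp (\<mu> * T)) * exp (-\<mu>*x)) has_integral cbar / \<mu>) {T..}"
      by (simp only: eq)
    then show ?thesis
    proof (rule has_integral_cong[THEN iffD1, rotated])
      fix x :: real assume "x \<in> {T..}"
      then show "cbar * exp (\<mu> * T) * exp (- \<mu> * x) = Cbc \<mu> cbar T x"
        unfolding Cbc_def by (auto simp: exp_add[symmetric] algebra_simps)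
    qed
  qed
  have "(Cbc \<mu> cbar T has_integral (cbar * T + cbar / \<mu>)) ({0..T} \<union> {T..})"
    by (rule has_integral_Un[OF h1 h2]) (rule negligible_subset[of "{T}"], auto)
  moreover have "{0..T} \<union> {T..} = {0::real..}" using T by auto
  ultimately show ?thesis unfolding AUC_def by (simp add: integral_unique)
qed

locale kset =
  fixes k k' k'' :: "real \<Rightarrow> real" and r kmax :: real
  assumes r_pos: "0 < r"
    and A1_0: "k 0 = 0"
    and A1_nonneg: "\<forall>c\<ge>0. 0 \<le> k c"
    and A1_cont: "continuous_on {0..} k"
    and A1_mono: "strict_mono_on {0..} k"
    and A1_d1: "\<forall>c>0. (k has_real_derivative k' c) (at c)"
    and A1_d2: "\<forall>c>0. (k' has_real_derivative k'' c) (at c)"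
    and A2: "(k \<longlongrightarrow> kmax) at_top"
    and A3: "(\<forall>c>0. k'' c < 0) \<or>
             (\<exists>c_infl>0. (\<forall>c. 0 < c \<and> c < c_infl \<longrightarrow> k'' c > 0) \<and>
                         (\<forall>c>c_infl. k'' c < 0))"
    and alpha_gt1: "kmax / r > 1"
begin

lemma kmax_gt: "r < kmax"
  using alpha_gt1 r_pos by (simp add: divide_simps split: if_splits)

lemma kmono: "0 \<le> x \<Longrightarrow> x < y \<Longrightarrow> k x < k y"
  using A1_mono unfolding strict_mono_on_def by auto

lemma kmono_le: "0 \<le> x \<Longrightarrow> x \<le> y \<Longrightarrow> k x \<le> k y"
  using kmono[of x y] by (cases "x = y") auto

lemma kcont_on: "0 \<le> a \<Longrightarrow> continuous_on {a..b} k"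
  using A1_cont by (rule continuous_on_subset) auto

lemma k_le_kmax: "0 \<le> c \<Longrightarrow> k c \<le> kmax"
proof -
  assume c: "0 \<le> c"
  have "eventually (\<lambda>x. k c \<le> k x) at_top"
    using eventually_ge_at_top[of c] by eventually_elim (use c kmono_le in auto)
  then show ?thesis using tendsto_lowerbound[OF A2] by auto
qed

lemma k_lt_kmax: "0 \<le> c \<Longrightarrow> k c < kmax"
  using kmono[of c "c+1"] k_le_kmax[of "c+1"] by auto

lemma large: "\<delta> > 0 \<Longrightarrow> \<exists>N. \<forall>x\<ge>N. kmax - \<delta> < k x"
proof -
  assume "\<delta> > 0"
  then have "eventually (\<lambda>x. kmax - \<delta> < k x) at_top"
    using order_tendstoD(1)[OF A2, of "kmax - \<delta>"] by auto
  then show ?thesis by (auto simp: eventually_at_top_linorder)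
qed

lemma z_ex: "\<exists>c. 0 < c \<and> k c = r"
proof -
  obtain N where N: "\<forall>x\<ge>N. kmax - (kmax - r) < k x" using large[of "kmax - r"] kmax_gt by auto
  define M where "M = max N 1"
  have "r < k M" using N M_def by auto
  moreover have "M > 0" using M_def by auto
  ultimately obtain x where x: "0 \<le> x" "x \<le> M" "k x = r"
    using IVT'[of k 0 r M] kcont_on[of 0 M] A1_0 r_pos by auto
  then have "x \<noteq> 0" using A1_0 r_pos by auto
  then show ?thesis using x by (intro exI[of _ x]) auto
qed

definition z where "z = zMIC k r"

lemma z_props: "0 < z" "k z = r"
proof -
  have "\<exists>!c. 0 < c \<and> k c = r"
  proof (rule ex_ex1I)
    show "\<exists>c. 0 < c \<and> k c = r" by (rule z_ex)
  next
    fix x y assume "0 < x \<and> k x = r" "0 < y \<and> k y = r"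
    then show "x = y" using kmono[of x y] kmono[of y x] by (cases x y rule: linorder_cases) auto
  qed
  then have "0 < z \<and> k z = r" unfolding z_def zMIC_def by (rule theI')
  then show "0 < z" "k z = r" by auto
qed

lemma k_gt_r: "z < c \<Longrightarrow> r < k c"
  using kmono[of z c] z_props by auto
lemma k_lt_r: "0 \<le> c \<Longrightarrow> c < z \<Longrightarrow> k c < r"
  using kmono[of c z] z_props by auto
lemma k_ge_r: "z \<le> c \<Longrightarrow> r \<le> k c"
  using kmono_le[of z c] z_props by auto
lemma k_le_r: "0 \<le> c \<Longrightarrow> c \<le> z \<Longrightarrow> k c \<le> r"
  using kmono_le[of c z] z_props by auto

lemma kd: "c > 0 \<Longrightarrow> (k has_real_derivative k' c) (at c)"
  using A1_d1 by auto
lemma kdd: "c > 0 \<Longrightarrow> (k' has_real_derivative k'' c) (at c)"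
  using A1_d2 by auto

lemma k'_cont: "0 < a \<Longrightarrow> continuous_on {a..b} k'"
  by (intro continuous_at_imp_continuous_on ballI DERIV_isCont[OF kdd]) auto

lemma k'_nonneg: "c > 0 \<Longrightarrow> 0 \<le> k' c"
proof (rule ccontr)
  assume c: "c > 0" and "\<not> 0 \<le> k' c"
  then obtain d where d: "d > 0" "\<forall>h>0. h < d \<longrightarrow> k c > k (c + h)"
    using DERIV_neg_dec_right[OF kd[OF c]] by auto
  then have "k c > k (c + d/2)" by auto
  moreover have "k c < k (c + d/2)" using kmono[of c "c + d/2"] c d by auto
  ultimately show False by auto
qed

lemma s_ex: "\<exists>s\<ge>0. (\<forall>c. 0 < c \<and> c < s \<longrightarrow> k'' c > 0) \<and> (\<forall>c>s. k'' c < 0)"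
proof (cases "\<forall>c>0. k'' c < 0")
  case True
  then show ?thesis by (intro exI[of _ 0]) auto
next
  case False
  then obtain ci where "ci > 0" "\<forall>c. 0 < c \<and> c < ci \<longrightarrow> k'' c > 0" "\<forall>c>ci. k'' c < 0"
    using A3 by auto
  then show ?thesis by (intro exI[of _ ci]) auto
qed

definition s0 where "s0 = (SOME s. s\<ge>0 \<and> (\<forall>c. 0 < c \<and> c < s \<longrightarrow> k'' c > 0) \<and> (\<forall>c>s. k'' c < 0))"

lemma s0: "s0 \<ge> 0" "\<And>c. 0 < c \<Longrightarrow> c < s0 \<Longrightarrow> k'' c > 0" "\<And>c. c > s0 \<Longrightarrow> k'' c < 0"
  using someI_ex[OF s_ex] unfolding s0_def[symmetric] by auto

lemma k'_inc: "0 < x \<Longrightarrow> x < y \<Longrightarrow> y \<le> s0 \<Longrightarrow> k' x < k' y"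
proof (rule DERIV_pos_imp_increasing_open[of x y k'])
  fix t assume "0 < x" "x < y" "y \<le> s0" "x < t" "t < y"
  then show "\<exists>d. (k' has_real_derivative d) (at t) \<and> 0 < d" using kdd[of t] s0(2)[of t] by auto
qed (use k'_cont in auto)

lemma k'_dec: "0 < x \<Longrightarrow> s0 \<le> x \<Longrightarrow> x < y \<Longrightarrow> k' y < k' x"
proof (rule DERIV_neg_imp_decreasing_open[of x y k'])
  fix t assume "0 < x" "s0 \<le> x" "x < y" "x < t" "t < y"
  then show "\<exists>d. (k' has_real_derivative d) (at t) \<and> d < 0" using kdd[of t] s0(3)[of t] by auto
qed (use k'_cont in auto)

lemma k'_pos: "c > 0 \<Longrightarrow> 0 < k' c"
proof -
  assume c: "c > 0"
  show ?thesis
  proof (cases "c < s0")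
    case True
    then show ?thesis using k'_inc[of "c/2" c] k'_nonneg[of "c/2"] c by auto
  next
    case False
    then show ?thesis using k'_dec[of c "c+1"] k'_nonneg[of "c+1"] c by auto
  qed
qed

definition phi where "phi c = c * k' c - k c + r"

lemma phi_deriv: "c > 0 \<Longrightarrow> (phi has_real_derivative c * k'' c) (at c)"
proof -
  assume c: "c > 0"
  have "((\<lambda>c. c * k' c - k c + r) has_real_derivative (1 * k' c + k'' c * c - k' c + 0)) (at c)"
    by (rule DERIV_add[OF DERIV_diff[OF DERIV_mult[OF DERIV_ident kdd[OF c]] kd[OF c]] DERIV_const])
  then show ?thesis unfolding phi_def[abs_def] by (simp add: mult.commute)
qed

lemma phi_cont: "0 < a \<Longrightarrow> continuous_on {a..b} phi"
  by (intro continuous_at_imp_continuous_on ballI DERIV_isCont[OF phi_deriv]) auto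

definition s1 where "s1 = max s0 z"

lemma s1_pos: "s1 > 0" "z \<le> s1" "s0 \<le> s1"
  using z_props s0 unfolding s1_def by auto

lemma phi_pos_small: "0 < c \<Longrightarrow> c \<le> s1 \<Longrightarrow> phi c > 0"
proof -
  assume c: "0 < c" "c \<le> s1"
  have A: "phi x > 0" if "0 < x" "x \<le> z" for x
    using k'_pos[of x] k_le_r[of x] that mult_pos_pos[of x "k' x"] unfolding phi_def by linarith
  show ?thesis
  proof (cases "c \<le> z")
    case True then show ?thesis using A c by auto
  next
    case False
    then have "c \<le> s0" using c unfolding s1_def by auto
    have "phi z < phi c"
    proof (rule DERIV_pos_imp_increasing_open[of z c phi])
      fix t assume "z < t" "t < c"
      then show "\<exists>d. (phi has_real_derivative d) (at t) \<and> 0 < d"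
        using phi_deriv[of t] s0(2)[of t] z_props \<open>c \<le> s0\<close> by (auto intro!: mult_pos_pos)
    qed (use False z_props phi_cont in auto)
    then show ?thesis using A[of z] z_props by auto
  qed
qed

lemma phi_dec: "s1 \<le> x \<Longrightarrow> x < y \<Longrightarrow> phi y < phi x"
proof (rule DERIV_neg_imp_decreasing_open[of x y phi])
  fix t assume "s1 \<le> x" "x < y" "x < t" "t < y"
  then show "\<exists>d. (phi has_real_derivative d) (at t) \<and> d < 0"
    using phi_deriv[of t] s0(3)[of t] s1_pos by (auto intro!: mult_pos_neg)
qed (use s1_pos phi_cont in auto)

lemma phi_neg_ex: "\<exists>b>s1. phi b < 0"
proof -
  define \<delta> where "\<delta> = (kmax - r) / 8"
  have dp: "\<delta> > 0" using kmax_gt unfolding \<delta>_def by auto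
  obtain N where N: "\<forall>x\<ge>N. kmax - \<delta> < k x" using large[OF dp] by auto
  define b where "b = 2 * max N s1"
  have b2: "b/2 \<ge> N" "b/2 \<ge> s1" "b > 0" using s1_pos unfolding b_def by auto
  obtain \<xi> where xi: "b/2 < \<xi>" "\<xi> < b" "k b - k (b/2) = (b - b/2) * k' \<xi>"
    using MVT2[of "b/2" b k k'] b2 kd s1_pos by force
  have "k' b < k' \<xi>" using k'_dec[of \<xi> b] xi b2 s1_pos by auto
  then have "(b/2) * k' b \<le> k b - k (b/2)" using xi b2 by auto
  moreover have "kmax - \<delta> < k (b/2)" using N b2 by auto
  then have "k b - k (b/2) < \<delta>" using k_lt_kmax[of b] b2 by auto
  moreover have "k b > kmax - \<delta>" using N b2 by auto
  moreover have "b * k' b = 2*(b/2 * k' b)" by simp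
  ultimately have "phi b < 0" using kmax_gt unfolding phi_def \<delta>_def by argo
  moreover have "b > s1" using b2 s1_pos by auto
  ultimately show ?thesis by auto
qed

definition co where "co = (SOME c. s1 < c \<and> phi c = 0)"

lemma co_ex: "\<exists>c. s1 < c \<and> phi c = 0"
proof -
  obtain b where b: "b > s1" "phi b < 0" using phi_neg_ex by auto
  obtain x where x: "s1 \<le> x" "x \<le> b" "phi x = 0"
    using IVT2'[of phi b 0 s1] b phi_pos_small[of s1] s1_pos phi_cont[of s1 b] by auto
  then have "x \<noteq> s1" using phi_pos_small[of s1] s1_pos by auto
  then show ?thesis using x by (intro exI[of _ x]) auto
qed

lemma co: "s1 < co" "phi co = 0"
  using someI_ex[OF co_ex] unfolding co_def[symmetric] by auto

lemma co_pos: "0 < co" "z < co" using co s1_pos by auto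

lemma phi_pos: "0 < c \<Longrightarrow> c < co \<Longrightarrow> phi c > 0"
  using phi_pos_small[of c] phi_dec[of c co] co by (cases "c \<le> s1") auto

lemma phi_neg: "co < c \<Longrightarrow> phi c < 0"
  using phi_dec[of co c] co by auto

lemma copt_eq: "copt k k' r = co"
  unfolding copt_def
proof (rule the_equality)
  show "0 < co \<and> k' co = (k co - r) / co"
    using co co_pos unfolding phi_def by (auto simp: field_simps)
next
  fix c assume c: "0 < c \<and> k' c = (k c - r) / c"
  then have "phi c = 0" unfolding phi_def by (auto simp: field_simps)
  then show "c = co" using phi_pos[of c] phi_neg[of c] c by (cases c co rule: linorder_cases) auto
qed

definition R where "R u = (k u - r) / u"

lemma R_deriv: "u > 0 \<Longrightarrow> (R has_real_derivative phi u / u^2) (at u)"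
proof -
  assume u: "u > 0"
  have "((\<lambda>u. (k u - r) / u) has_real_derivative ((k' u - 0) * u - (k u - r) * 1) / (u * u)) (at u)"
    by (intro derivative_intros kd u) (use u in auto)
  then show ?thesis unfolding R_def[abs_def] phi_def by (simp add: power2_eq_square algebra_simps)
qed

lemma R_cont: "0 < a \<Longrightarrow> continuous_on {a..b} R"
  by (intro continuous_at_imp_continuous_on ballI DERIV_isCont[OF R_deriv]) auto

lemma R_inc: "0 < x \<Longrightarrow> x < y \<Longrightarrow> y \<le> co \<Longrightarrow> R x < R y"
proof (rule DERIV_pos_imp_increasing_open[of x y R])
  fix t assume "0 < x" "x < y" "y \<le> co" "x < t" "t < y"
  then show "\<exists>d. (R has_real_derivative d) (at t) \<and> 0 < d"
    using R_deriv[of t] phi_pos[of t] by auto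
qed (use R_cont in auto)

lemma R_dec: "co \<le> x \<Longrightarrow> x < y \<Longrightarrow> R y < R x"
proof (rule DERIV_neg_imp_decreasing_open[of x y R])
  fix t assume "co \<le> x" "x < y" "x < t" "t < y"
  then show "\<exists>d. (R has_real_derivative d) (at t) \<and> d < 0"
    using R_deriv[of t] phi_neg[of t] co_pos by (auto intro!: divide_neg_pos)
qed (use R_cont co_pos in auto)

lemma R_pos: "z < u \<Longrightarrow> R u > 0"
  using k_gt_r[of u] z_props unfolding R_def by auto

lemma R_nonneg: "z \<le> u \<Longrightarrow> R u \<ge> 0"
  using k_ge_r[of u] z_props unfolding R_def by auto

lemma R_max: "0 < u \<Longrightarrow> R u \<le> R co"
  using R_inc[of u co] R_dec[of co u] by (cases u co rule: linorder_cases) auto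


definition I where "I c = integral {z..c} R"

lemma R_cont_z: "continuous_on {z..b} R" using R_cont z_props by auto

lemma I_diff: "z \<le> a \<Longrightarrow> a \<le> b \<Longrightarrow> I b - I a = integral {a..b} R"
  using int_split[of z a b R] R_cont_z[of b] unfolding I_def by auto

lemma I_z: "I z = 0" unfolding I_def by simp

lemma I_cont: "continuous_on {z..b} I"
  unfolding I_def[abs_def]
  by (rule indefinite_integral_continuous_1) (use R_cont_z integrable_continuous_interval in auto)

lemma I_strict: "z \<le> a \<Longrightarrow> a < b \<Longrightarrow> I a < I b"
proof -
  assume ab: "z \<le> a" "a < b"
  define m where "m = (a + b) / 2"
  have m: "a < m" "m < b" using ab unfolding m_def by auto
  have zm: "z < m" using ab m by auto
  have c1: "continuous_on {a..m} R" "continuous_on {m..b} R" "continuous_on {a..b} R"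
    using R_cont[of a] R_cont[of m] z_props ab m by auto
  have "(m - a) * 0 \<le> integral {a..m} R"
    by (rule int_ge_const) (use m c1 ab R_nonneg in auto)
  moreover have "(b - m) * ((k m - r) / b) \<le> integral {m..b} R"
  proof (rule int_ge_const)
    fix x assume x: "m \<le> x" "x \<le> b"
    have "k m \<le> k x" using kmono_le[of m x] x zm z_props by auto
    moreover have "r < k m" using k_gt_r[OF zm] .
    moreover have "x > 0" using x zm z_props by auto
    ultimately show "(k m - r) / b \<le> R x" unfolding R_def using x
      by (smt (verit, best) divide_left_mono divide_right_mono mult_pos_pos)
  qed (use m c1 in auto)
  moreover have "(b - m) * ((k m - r) / b) > 0" using m k_gt_r[OF zm] zm z_props by auto
  ultimately show ?thesis using I_diff[of a b] int_split[of a m b R] m ab c1 by auto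
qed

lemma I_inc_bound: "z \<le> a \<Longrightarrow> a < b \<Longrightarrow> b \<le> co \<Longrightarrow> (b - a) * R a < I b - I a"
  using I_diff[of a b] int_inc_strict[of a b R] R_cont[of a b] R_inc z_props by auto

lemma I_dec_bound: "co \<le> a \<Longrightarrow> a < b \<Longrightarrow> I b - I a < (b - a) * R a"
  using I_diff[of a b] int_dec_strict[of a b R] R_cont[of a b] R_dec co_pos by auto


lemma Cbc_pos: "0 < cbar \<Longrightarrow> 0 < Cbc \<mu> cbar T t"
  unfolding Cbc_def by auto

definition Ts where "Ts \<mu> cbar T = T + ln (cbar / z) / \<mu>"

lemma Ts_ge: "0 < \<mu> \<Longrightarrow> z \<le> cbar \<Longrightarrow> T \<le> Ts \<mu> cbar T"
  unfolding Ts_def using z_props by auto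

lemma Cbc_ge_z:
  assumes mu: "0 < \<mu>" and c: "z \<le> cbar" and t: "t \<le> Ts \<mu> cbar T"
  shows "z \<le> Cbc \<mu> cbar T t"
proof -
  have cp: "cbar > 0" using c z_props by auto
  have zz: "z = cbar * exp (- ln (cbar / z))" using cp z_props by (simp add: exp_minus)
  have "\<mu> * max 0 (t - T) \<le> ln (cbar / z)"
    using t mu c z_props unfolding Ts_def by (auto simp: max_def field_simps)
  then have "exp (- ln (cbar / z)) \<le> exp (- \<mu> * max 0 (t - T))" by simp
  then have "cbar * exp (- ln (cbar / z)) \<le> cbar * exp (- \<mu> * max 0 (t - T))"
    using cp by (intro mult_left_mono) auto
  then show ?thesis unfolding Cbc_alt using zz by simp
qed

lemma Cbc_le_z:
  assumes mu: "0 < \<mu>" and c: "z \<le> cbar" and t: "Ts \<mu> cbar T \<le> t" and T: "0 \<le> T"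
  shows "Cbc \<mu> cbar T t \<le> z"
proof -
  have cp: "cbar > 0" using c z_props by auto
  have zz: "z = cbar * exp (- ln (cbar / z))" using cp z_props by (simp add: exp_minus)
  have l0: "ln (cbar / z) \<ge> 0" using c z_props by auto
  have tT: "T \<le> t" using Ts_ge[OF mu c, of T] t by auto
  have "ln (cbar / z) \<le> \<mu> * (t - T)" using t mu unfolding Ts_def by (simp add: field_simps)
  then have "\<mu> * max 0 (t - T) \<ge> ln (cbar / z)" using tT by simp
  then have "exp (- ln (cbar / z)) \<ge> exp (- \<mu> * max 0 (t - T))" by simp
  then have "cbar * exp (- ln (cbar / z)) \<ge> cbar * exp (- \<mu> * max 0 (t - T))"
    using cp by (intro mult_left_mono) auto
  then show ?thesis unfolding Cbc_alt using zz by simp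
qed

lemma g_cont: "0 < cbar \<Longrightarrow> continuous_on S (\<lambda>t. k (Cbc \<mu> cbar T t) - r)"
proof -
  assume cp: "0 < cbar"
  have "continuous_on S (\<lambda>t. k (Cbc \<mu> cbar T t))"
    by (rule continuous_on_compose2[OF A1_cont Cbc_cont]) (use Cbc_pos[OF cp] in \<open>auto simp: less_imp_le\<close>)
  then show ?thesis by (intro continuous_intros)
qed

lemma LR_le_Ts:
  assumes mu: "0 < \<mu>" and c: "z \<le> cbar" and T: "0 \<le> T" and T': "0 \<le> T'"
  shows "LR k r (Cbc \<mu> cbar T) T' \<le> LR k r (Cbc \<mu> cbar T) (Ts \<mu> cbar T)"
proof -
  define g where "g = (\<lambda>t. k (Cbc \<mu> cbar T t) - r)"
  have cp: "0 < cbar" using c z_props by auto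
  have gc: "continuous_on S g" for S unfolding g_def by (rule g_cont[OF cp])
  have TsT: "0 \<le> Ts \<mu> cbar T" using Ts_ge[OF mu c, of T] T by auto
  have "integral {0..T'} g \<le> integral {0..Ts \<mu> cbar T} g"
  proof (cases "T' \<le> Ts \<mu> cbar T")
    case True
    have "(Ts \<mu> cbar T - T') * 0 \<le> integral {T'..Ts \<mu> cbar T} g"
      by (rule int_ge_const) (use True gc Cbc_ge_z[OF mu c] k_ge_r in \<open>auto simp: g_def\<close>)
    then show ?thesis using int_split[of 0 T' "Ts \<mu> cbar T" g] True T' gc by auto
  next
    case False
    have "integral {Ts \<mu> cbar T..T'} g \<le> (T' - Ts \<mu> cbar T) * 0"
      by (rule int_le_const) (use False gc Cbc_le_z[OF mu c _ T] k_le_r Cbc_pos[OF cp] in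
          \<open>auto simp: g_def less_imp_le\<close>)
    then show ?thesis using int_split[of 0 "Ts \<mu> cbar T" T' g] False TsT gc by auto
  qed
  then show ?thesis unfolding LR_def g_def by (simp add: divide_right_mono)
qed

lemma LR_Ts:
  assumes mu: "0 < \<mu>" and c: "z \<le> cbar" and T: "0 \<le> T"
  shows "LR k r (Cbc \<mu> cbar T) (Ts \<mu> cbar T) = (T * (k cbar - r) + I cbar / \<mu>) / ln 10"
proof -
  define g where "g = (\<lambda>t. k (Cbc \<mu> cbar T t) - r)"
  define E where "E = (\<lambda>t. cbar * exp (- \<mu> * (t - T)))"
  define S where "S = Ts \<mu> cbar T"
  have cp: "0 < cbar" using c z_props by auto
  have gc: "continuous_on X g" for X unfolding g_def by (rule g_cont[OF cp])
  have TS: "T \<le> S" using Ts_ge[OF mu c] unfolding S_def by auto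
  have p1: "integral {0..T} g = T * (k cbar - r)"
  proof -
    have "integral {0..T} g = integral {0..T} (\<lambda>_. k cbar - r)"
      by (rule integral_cong) (auto simp: g_def Cbc_def)
    then show ?thesis using T by simp
  qed
  have ES: "E S = z"
    using cp z_props mu unfolding E_def S_def Ts_def by (simp add: exp_minus)
  have ET: "E T = cbar" unfolding E_def by simp
  have Emap: "E t \<in> {z..cbar}" if "T \<le> t" "t \<le> S" for t
  proof -
    have "E t = Cbc \<mu> cbar T t" using that unfolding E_def Cbc_def by auto
    then have "z \<le> E t" using Cbc_ge_z[OF mu c, of t T] that unfolding S_def by auto
    moreover have "E t \<le> cbar" using that mu cp unfolding E_def by auto
    ultimately show ?thesis by auto
  qed
  have Emap2: "E t \<in> {z<..<cbar}" if "T < t" "t < S" for t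
  proof -
    have "E t < E T" using that mu cp unfolding E_def by auto
    moreover have "E S < E t" using that mu cp unfolding E_def by auto
    ultimately show ?thesis using ES ET by auto
  qed
  have Ederiv: "(E has_real_derivative (- \<mu> * E t)) (at t)" for t
  proof -
    have "(E has_real_derivative cbar * (exp (- \<mu> * (t - T)) * (- \<mu> * (1 - 0)))) (at t)"
      unfolding E_def by (intro derivative_eq_intros) auto
    then show ?thesis unfolding E_def by (simp add: algebra_simps)
  qed
  have Econt: "continuous_on X E" for X unfolding E_def by (intro continuous_intros)
  define \<psi> where "\<psi> = (\<lambda>t. I (E t))"
  have psi_cont: "continuous_on {T..S} \<psi>"
    unfolding \<psi>_def by (rule continuous_on_compose2[OF I_cont[of cbar] Econt]) (use Emap in auto)
  have psi_der: "(\<psi> has_vector_derivative (- \<mu> * g t)) (at t)" if t: "t \<in> {T<..<S}" for t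
  proof -
    have Et: "E t \<in> {z<..<cbar}" using Emap2 t by auto
    have "(I has_real_derivative R (E t)) (at (E t) within {z..cbar})"
      unfolding I_def[abs_def] by (rule integral_has_real_derivative) (use R_cont_z Et in auto)
    then have "(I has_real_derivative R (E t)) (at (E t))"
      using at_within_Icc_at[of z "E t" cbar] Et by auto
    then have der: "(\<psi> has_real_derivative R (E t) * (- \<mu> * E t)) (at t)"
      unfolding \<psi>_def by (rule DERIV_chain2[OF _ Ederiv])
    have eq: "R (E t) * (- \<mu> * E t) = - \<mu> * g t"
    proof -
      have "E t > 0" using Et z_props by auto
      moreover have "E t = Cbc \<mu> cbar T t" using t unfolding E_def Cbc_def by auto
      ultimately show ?thesis unfolding R_def g_def by (simp add: field_simps)
    qed
    show ?thesis using der unfolding eq has_real_derivative_iff_has_vector_derivative .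
  qed
  have "((\<lambda>t. - \<mu> * g t) has_integral (\<psi> S - \<psi> T)) {T..S}"
    by (rule fundamental_theorem_of_calculus_interior[OF TS psi_cont psi_der])
  moreover have "\<psi> S - \<psi> T = - I cbar" unfolding \<psi>_def using ES ET I_z by simp
  ultimately have "((\<lambda>t. (-1/\<mu>) * (- \<mu> * g t)) has_integral (-1/\<mu>) * (- I cbar)) {T..S}"
    by (intro has_integral_cmult_real) simp
  then have "(g has_integral I cbar / \<mu>) {T..S}" using mu by simp
  then have p2: "integral {T..S} g = I cbar / \<mu>" by (rule integral_unique)
  have "integral {0..S} g = integral {0..T} g + integral {T..S} g"
    using int_split[of 0 T S g] T TS gc by auto
  then show ?thesis using p1 p2 unfolding LR_def g_def S_def by simp
qed

lemma LRmax_eq: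
  assumes mu: "0 < \<mu>" and c: "z \<le> cbar" and T: "0 \<le> T"
  shows "LRmax k r (Cbc \<mu> cbar T) = (T * (k cbar - r) + I cbar / \<mu>) / ln 10"
proof -
  have "LRmax k r (Cbc \<mu> cbar T) = LR k r (Cbc \<mu> cbar T) (Ts \<mu> cbar T)"
    unfolding LRmax_def
    by (rule cSup_eq_maximum) (use Ts_ge[OF mu c, of T] T LR_le_Ts[OF mu c T] in auto)
  then show ?thesis using LR_Ts[OF mu c T] by simp
qed

end

locale kset2 = kset +
  fixes \<mu> LRt :: real
  assumes mu_pos: "0 < \<mu>" and LRt_pos: "0 < LRt"
begin

definition L where "L = ln 10 * LRt"

lemma L_pos: "L > 0" unfolding L_def using LRt_pos by auto

lemma feas_iff: "feasible k r \<mu> LRt c T \<longleftrightarrow> z \<le> c \<and> 0 \<le> T \<and> T * (k c - r) + I c / \<mu> = L"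
proof
  assume f: "feasible k r \<mu> LRt c T"
  then have c: "z \<le> c" and T: "0 \<le> T" unfolding feasible_def z_def by auto
  then have "(T * (k c - r) + I c / \<mu>) / ln 10 = LRt"
    using f LRmax_eq[OF mu_pos c T] unfolding feasible_def by auto
  then show "z \<le> c \<and> 0 \<le> T \<and> T * (k c - r) + I c / \<mu> = L"
    using c T unfolding L_def by (auto simp: field_simps)
next
  assume h: "z \<le> c \<and> 0 \<le> T \<and> T * (k c - r) + I c / \<mu> = L"
  then have "LRmax k r (Cbc \<mu> c T) = LRt" using LRmax_eq[OF mu_pos, of c T] unfolding L_def by auto
  then show "feasible k r \<mu> LRt c T" using h unfolding feasible_def z_def by auto
qed

lemma feas_gt: "feasible k r \<mu> LRt c T \<Longrightarrow> z < c"
proof (rule ccontr)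
  assume f: "feasible k r \<mu> LRt c T" and "\<not> z < c"
  then have "c = z" using feas_iff by auto
  then show False using f feas_iff z_props I_z L_pos by auto
qed

lemma kR: "0 < c \<Longrightarrow> k c - r = c * R c" unfolding R_def by auto

definition To where "To = (L - I co / \<mu>) / (k co - r)"

lemma opt_i:
  assumes rho: "I co < \<mu> * L" and f: "feasible k r \<mu> LRt c T" and ne: "c \<noteq> co"
  shows "co * To + co / \<mu> < c * T + c / \<mu>"
proof -
  have cz: "z < c" using feas_gt[OF f] .
  have cp: "0 < c" using cz z_props by auto
  have T: "0 \<le> T" and eqc: "T * (k c - r) + I c / \<mu> = L" using f feas_iff by auto
  have kco: "k co - r > 0" using k_gt_r co_pos by auto
  have To0: "To > 0" unfolding To_def using rho mu_pos kco by (auto simp: field_simps)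
  have eqo: "To * (k co - r) + I co / \<mu> = L" unfolding To_def using kco by auto
  have Rc: "R c > 0" using R_pos cz by auto
  have Rco: "R co > 0" using R_pos co_pos by auto
  define A where "A = T * c"
  define B where "B = To * co"
  have A0: "A \<ge> 0" and B0: "B \<ge> 0" unfolding A_def B_def using T cp To0 co_pos by auto
  have e1: "A * R c + I c / \<mu> = L" using eqc kR[OF cp] unfolding A_def by (simp add: algebra_simps)
  have e2: "B * R co + I co / \<mu> = L" using eqo kR[OF co_pos(1)] unfolding B_def by (simp add: algebra_simps)
  show ?thesis
  proof (cases "c < co")
    case True
    have ib: "(co - c) * R c < I co - I c" using I_inc_bound[of c co] cz True by auto
    have Rlt: "R c < R co" using R_inc[OF cp True] by auto
    have "A * R c = B * R co + (I co - I c) / \<mu>" using e1 e2 by (simp add: diff_divide_distrib)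
    also have "\<dots> > B * R co + (co - c) * R c / \<mu>" using ib mu_pos by (simp add: divide_strict_right_mono)
    finally have "A * R c > B * R co + (co - c) * R c / \<mu>" .
    moreover have "B * R co \<ge> B * R c" using B0 Rlt by (simp add: mult_left_mono)
    ultimately have "A * R c > (B + (co - c) / \<mu>) * R c" by (simp add: algebra_simps)
    then have "A > B + (co - c) / \<mu>" using Rc by (simp add: mult_less_cancel_right)
    then show ?thesis unfolding A_def B_def by (simp add: algebra_simps diff_divide_distrib)
  next
    case False
    then have ccon: "co < c" using ne by auto
    have ib: "I c - I co < (c - co) * R co" using I_dec_bound[of co c] ccon by auto
    have Rlt: "R c < R co" using R_dec[of co c] ccon by auto
    have "B * R co = A * R c + (I c - I co) / \<mu>" using e1 e2 by (simp add: diff_divide_distrib)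
    also have "\<dots> < A * R c + (c - co) * R co / \<mu>" using ib mu_pos by (simp add: divide_strict_right_mono)
    finally have "B * R co < A * R c + (c - co) * R co / \<mu>" .
    moreover have "A * R c \<le> A * R co" using A0 Rlt by (simp add: mult_left_mono)
    ultimately have "B * R co < (A + (c - co) / \<mu>) * R co" by (simp add: algebra_simps)
    then have "B < A + (c - co) / \<mu>" using Rco by (simp add: mult_less_cancel_right)
    then show ?thesis unfolding A_def B_def by (simp add: algebra_simps diff_divide_distrib)
  qed
qed

lemma cs_ex1: "I co \<ge> \<mu> * L \<Longrightarrow> \<exists>!c. z \<le> c \<and> I c = \<mu> * L"
proof (rule ex_ex1I)
  assume "I co \<ge> \<mu> * L"
  then show "\<exists>c. z \<le> c \<and> I c = \<mu> * L"
    using IVT'[of I z "\<mu> * L" co] I_z L_pos mu_pos co_pos I_cont[of co] by force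
next
  fix x y assume "z \<le> x \<and> I x = \<mu> * L" "z \<le> y \<and> I y = \<mu> * L"
  then show "x = y" using I_strict[of x y] I_strict[of y x] by (cases x y rule: linorder_cases) auto
qed

definition cs where "cs = (THE c. z \<le> c \<and> I c = \<mu> * L)"

lemma cs: assumes "I co \<ge> \<mu> * L" shows "z \<le> cs" "I cs = \<mu> * L" "z < cs" "cs \<le> co"
proof -
  show c1: "z \<le> cs" "I cs = \<mu> * L" using theI'[OF cs_ex1[OF assms]] unfolding cs_def[symmetric] by auto
  then show "z < cs" using I_z L_pos mu_pos by (cases "z = cs") auto
  show "cs \<le> co"
  proof (rule ccontr)
    assume "\<not> cs \<le> co"
    then have "I co < I cs" using I_strict[of co cs] co_pos by auto
    then show False using assms c1 by auto
  qed
qed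

lemma opt_ii:
  assumes rho: "I co \<ge> \<mu> * L" and f: "feasible k r \<mu> LRt c T" and ne: "c \<noteq> cs"
  shows "cs / \<mu> < c * T + c / \<mu>"
proof -
  have cz: "z < c" using feas_gt[OF f] .
  have cp: "0 < c" using cz z_props by auto
  have T: "0 \<le> T" and eqc: "T * (k c - r) + I c / \<mu> = L" using f feas_iff by auto
  have Rc: "R c > 0" using R_pos cz by auto
  define A where "A = T * c"
  have A0: "A \<ge> 0" unfolding A_def using T cp by auto
  have e1: "\<mu> * A * R c + I c = \<mu> * L" using eqc kR[OF cp] mu_pos unfolding A_def by (simp add: field_simps)
  have "\<mu> * A * R c \<ge> 0" using A0 Rc mu_pos by auto
  then have "I c \<le> I cs" using e1 cs(2)[OF rho] by auto
  then have "c \<le> cs" using I_strict[of cs c] cs[OF rho] by force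
  then have clt: "c < cs" using ne by auto
  have ib: "(cs - c) * R c < I cs - I c" using I_inc_bound[of c cs] cz clt cs[OF rho] by auto
  then have "(cs - c) * R c < (\<mu> * A) * R c" using e1 cs(2)[OF rho] by (simp add: algebra_simps)
  then have "cs - c < \<mu> * A" using Rc by (simp add: mult_less_cancel_right)
  then have "cs / \<mu> - c / \<mu> < A" using mu_pos by (simp add: field_simps)
  then show ?thesis unfolding A_def by (simp add: algebra_simps)
qed

lemma rho_eq: "rho k k' r = I co"
  unfolding rho_def I_def z_def copt_eq R_def[abs_def] ..

lemma feas_co: "I co < \<mu> * L \<Longrightarrow> feasible k r \<mu> LRt co To"
proof -
  assume rho: "I co < \<mu> * L"
  have kco: "k co - r > 0" using k_gt_r co_pos by auto
  have To0: "To > 0" unfolding To_def using rho mu_pos kco by (auto simp: field_simps)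
  have eqo: "To * (k co - r) + I co / \<mu> = L" unfolding To_def using kco by auto
  show ?thesis using feas_iff To0 eqo co_pos by auto
qed

lemma case_i:
  assumes rho: "I co < \<mu> * L"
  shows "(\<forall>c T. is_opt k r \<mu> LRt c T \<longleftrightarrow> c = co \<and> T = To) \<and>
         LR k r (Cbc \<mu> co To) (To + (1/\<mu>) * ln (co / z)) = LRt \<and>
         AUC (Cbc \<mu> co To) = (1/\<mu> + To) * co"
proof (intro conjI allI)
  have kco: "k co - r > 0" using k_gt_r co_pos by auto
  have To0: "To > 0" unfolding To_def using rho mu_pos kco by (auto simp: field_simps)
  have eqo: "To * (k co - r) + I co / \<mu> = L" unfolding To_def using kco by auto
  have fo: "feasible k r \<mu> LRt co To" by (rule feas_co[OF rho])
  have AUCo: "AUC (Cbc \<mu> co To) = co * To + co / \<mu>" using AUC_Cbc[OF mu_pos] To0 by auto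
  fix c T
  show "is_opt k r \<mu> LRt c T \<longleftrightarrow> c = co \<and> T = To"
  proof
    assume o: "is_opt k r \<mu> LRt c T"
    then have f: "feasible k r \<mu> LRt c T" and le: "AUC (Cbc \<mu> c T) \<le> AUC (Cbc \<mu> co To)"
      using fo unfolding is_opt_def by auto
    have T: "0 \<le> T" using f feas_iff by auto
    have "c = co"
    proof (rule ccontr)
      assume "c \<noteq> co"
      then show False using opt_i[OF rho f] le AUCo AUC_Cbc[OF mu_pos T] by auto
    qed
    moreover have "T = To"
    proof -
      have "T * (k co - r) + I co / \<mu> = L" using f feas_iff \<open>c = co\<close> by auto
      then have "T * (k co - r) = To * (k co - r)" using eqo by linarith
      then show ?thesis using kco by auto
    qed
    ultimately show "c = co \<and> T = To" by auto
  next
    assume "c = co \<and> T = To"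
    then have cT: "c = co" "T = To" by auto
    show "is_opt k r \<mu> LRt c T"
      unfolding is_opt_def
    proof (intro conjI allI impI)
      show "feasible k r \<mu> LRt c T" using fo cT by simp
      fix c' T' assume f': "feasible k r \<mu> LRt c' T'"
      have T': "0 \<le> T'" using f' feas_iff by auto
      show "AUC (Cbc \<mu> c T) \<le> AUC (Cbc \<mu> c' T')"
      proof (cases "c' = co")
        case True
        have "T' * (k co - r) + I co / \<mu> = L" using f' feas_iff True by auto
        then have "T' * (k co - r) = To * (k co - r)" using eqo by linarith
        then have "T' = To" using kco by auto
        then show ?thesis using True cT by simp
      next
        case False
        then show ?thesis using opt_i[OF rho f' False] cT AUCo AUC_Cbc[OF mu_pos T'] by auto
      qed
    qed
  qed
next
  have kco: "k co - r > 0" using k_gt_r co_pos by auto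
  have To0: "To > 0" unfolding To_def using rho mu_pos kco by (auto simp: field_simps)
  have eqo: "To * (k co - r) + I co / \<mu> = L" unfolding To_def using kco by auto
  have "To + (1/\<mu>) * ln (co / z) = Ts \<mu> co To" unfolding Ts_def by simp
  then show "LR k r (Cbc \<mu> co To) (To + (1/\<mu>) * ln (co / z)) = LRt"
    using LR_Ts[OF mu_pos, of co To] co_pos To0 eqo unfolding L_def by auto
  show "AUC (Cbc \<mu> co To) = (1/\<mu> + To) * co"
    using AUC_Cbc[OF mu_pos, of To co] To0 by (simp add: algebra_simps)
qed

lemma cstar_eq: "I co \<ge> \<mu> * L \<Longrightarrow> cstar k r \<mu> LRt = cs"
proof -
  assume rho: "I co \<ge> \<mu> * L"
  have "(\<lambda>c. zMIC k r \<le> c \<and> integral {zMIC k r..c} (\<lambda>u. (k u - r) / u) = ln 10 * LRt * \<mu>)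
        = (\<lambda>c. z \<le> c \<and> I c = \<mu> * L)"
    unfolding I_def z_def R_def[abs_def] L_def by (auto simp: algebra_simps)
  then show ?thesis unfolding cstar_def cs_def by simp
qed

lemma case_ii:
  assumes rho: "I co \<ge> \<mu> * L"
  shows "(\<forall>c T. is_opt k r \<mu> LRt c T \<longleftrightarrow> c = cs \<and> T = 0) \<and>
           (\<forall>t\<ge>0. Cbc \<mu> cs 0 t = cs * exp (- \<mu> * t)) \<and>
           LR k r (Cbc \<mu> cs 0) ((1/\<mu>) * ln (cs / z)) = LRt \<and>
           AUC (Cbc \<mu> cs 0) = cs / \<mu>"
proof (intro conjI allI impI)
  have fo: "feasible k r \<mu> LRt cs 0" using feas_iff cs[OF rho] mu_pos by auto
  have AUCo: "AUC (Cbc \<mu> cs 0) = cs / \<mu>" using AUC_Cbc[OF mu_pos, of 0 cs] by auto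
  then show "AUC (Cbc \<mu> cs 0) = cs / \<mu>" .
  fix c T
  show "is_opt k r \<mu> LRt c T \<longleftrightarrow> c = cs \<and> T = 0"
  proof
    assume o: "is_opt k r \<mu> LRt c T"
    then have f: "feasible k r \<mu> LRt c T" and le: "AUC (Cbc \<mu> c T) \<le> AUC (Cbc \<mu> cs 0)"
      using fo unfolding is_opt_def by auto
    have T: "0 \<le> T" using f feas_iff by auto
    have "c = cs"
    proof (rule ccontr)
      assume "c \<noteq> cs"
      then show False using opt_ii[OF rho f] le AUCo AUC_Cbc[OF mu_pos T] by auto
    qed
    moreover have "T = 0"
    proof -
      have kc: "k cs - r > 0" using k_gt_r cs[OF rho] by auto
      have "T * (k cs - r) + I cs / \<mu> = L" using f feas_iff \<open>c = cs\<close> by auto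
      moreover have "I cs / \<mu> = L" using cs(2)[OF rho] mu_pos by auto
      ultimately have "T * (k cs - r) = 0" by linarith
      then show ?thesis using kc by auto
    qed
    ultimately show "c = cs \<and> T = 0" by auto
  next
    assume "c = cs \<and> T = 0"
    then have cT: "c = cs" "T = 0" by auto
    show "is_opt k r \<mu> LRt c T"
      unfolding is_opt_def
    proof (intro conjI allI impI)
      show "feasible k r \<mu> LRt c T" using fo cT by simp
      fix c' T' assume f': "feasible k r \<mu> LRt c' T'"
      have T': "0 \<le> T'" using f' feas_iff by auto
      show "AUC (Cbc \<mu> c T) \<le> AUC (Cbc \<mu> c' T')"
      proof (cases "c' = cs")
        case True
        have kc: "k cs - r > 0" using k_gt_r cs[OF rho] by auto
        have "T' * (k cs - r) + I cs / \<mu> = L" using f' feas_iff True by auto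
        moreover have "I cs / \<mu> = L" using cs(2)[OF rho] mu_pos by auto
        ultimately have "T' * (k cs - r) = 0" by linarith
        then have "T' = 0" using kc by auto
        then show ?thesis using True cT by simp
      next
        case False
        then show ?thesis using opt_ii[OF rho f' False] cT AUCo AUC_Cbc[OF mu_pos T'] by auto
      qed
    qed
  qed
next
  fix t :: real assume "0 \<le> t"
  then show "Cbc \<mu> cs 0 t = cs * exp (- \<mu> * t)" unfolding Cbc_def by auto
next
  have "(1/\<mu>) * ln (cs / z) = Ts \<mu> cs 0" unfolding Ts_def by simp
  then show "LR k r (Cbc \<mu> cs 0) ((1/\<mu>) * ln (cs / z)) = LRt"
    using LR_Ts[OF mu_pos, of cs 0] cs[OF rho] mu_pos unfolding L_def by auto
qed

lemma main:
  "(let z = zMIC k r; co = copt k k' r; \<rho> = rho k k' r;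
         Topt = (ln 10 * LRt - \<rho> / \<mu>) / (k co - r);
         cs = cstar k r \<mu> LRt
     in (\<rho> < ln 10 * LRt * \<mu> \<longrightarrow>
           (\<forall>c T. is_opt k r \<mu> LRt c T \<longleftrightarrow> c = co \<and> T = Topt) \<and>
           LR k r (Cbc \<mu> co Topt) (Topt + (1/\<mu>) * ln (co / z)) = LRt \<and>
           AUC (Cbc \<mu> co Topt) = (1/\<mu> + (ln 10 * LRt - \<rho> / \<mu>) / (k co - r)) * co)
      \<and> (\<rho> \<ge> ln 10 * LRt * \<mu> \<longrightarrow>
           (\<forall>c T. is_opt k r \<mu> LRt c T \<longleftrightarrow> c = cs \<and> T = 0) \<and>
           (\<forall>t\<ge>0. Cbc \<mu> cs 0 t = cs * exp (- \<mu> * t)) \<and>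
           LR k r (Cbc \<mu> cs 0) ((1/\<mu>) * ln (cs / z)) = LRt \<and>
           AUC (Cbc \<mu> cs 0) = cs / \<mu>))"
proof -
  have e: "ln 10 * LRt * \<mu> = \<mu> * L" unfolding L_def by simp
  have t: "(ln 10 * LRt - I co / \<mu>) / (k co - r) = To" unfolding To_def L_def ..
  show ?thesis
    unfolding Let_def z_def[symmetric] copt_eq rho_eq e t
    using case_i case_ii cstar_eq by auto
qed


end

theorem theorem3:
  fixes k k' k'' :: "real \<Rightarrow> real" and r kmax \<mu> LRt :: real
  assumes r_pos: "0 < r"
    and A1_0: "k 0 = 0"
    and A1_nonneg: "\<forall>c\<ge>0. 0 \<le> k c"
    and A1_cont: "continuous_on {0..} k"
    and A1_mono: "strict_mono_on {0..} k"
    and A1_d1: "\<forall>c>0. (k has_real_derivative k' c) (at c)"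
    and A1_d2: "\<forall>c>0. (k' has_real_derivative k'' c) (at c)"
    and A2: "(k \<longlongrightarrow> kmax) at_top"
    and A3: "(\<forall>c>0. k'' c < 0) \<or>
             (\<exists>c_infl>0. (\<forall>c. 0 < c \<and> c < c_infl \<longrightarrow> k'' c > 0) \<and>
                         (\<forall>c>c_infl. k'' c < 0))"
    and alpha_gt1: "kmax / r > 1"
    and mu_pos: "0 < \<mu>"
    and LRt_pos: "0 < LRt"
  shows
   "(let z = zMIC k r; co = copt k k' r; \<rho> = rho k k' r;
         Topt = (ln 10 * LRt - \<rho> / \<mu>) / (k co - r);
         cs = cstar k r \<mu> LRt
     in (\<rho> < ln 10 * LRt * \<mu> \<longrightarrow>
           (\<forall>c T. is_opt k r \<mu> LRt c T \<longleftrightarrow> c = co \<and> T = Topt) \<and>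
           LR k r (Cbc \<mu> co Topt) (Topt + (1/\<mu>) * ln (co / z)) = LRt \<and>
           AUC (Cbc \<mu> co Topt) = (1/\<mu> + (ln 10 * LRt - \<rho> / \<mu>) / (k co - r)) * co)
      \<and> (\<rho> \<ge> ln 10 * LRt * \<mu> \<longrightarrow>
           (\<forall>c T. is_opt k r \<mu> LRt c T \<longleftrightarrow> c = cs \<and> T = 0) \<and>
           (\<forall>t\<ge>0. Cbc \<mu> cs 0 t = cs * exp (- \<mu> * t)) \<and>
           LR k r (Cbc \<mu> cs 0) ((1/\<mu>) * ln (cs / z)) = LRt \<and>
           AUC (Cbc \<mu> cs 0) = cs / \<mu>))"
proof -
  interpret kset2 k k' k'' r kmax \<mu> LRt
    by unfold_locales (use assms in auto)
  show ?thesis by (rule main)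
qed

end
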